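(* If $X$ is a non-separated-points space, then $X$ is dense-pathwise connected, i.e., every dense subset of $X$ (with the subspace topology) is pathwise connected.
   Context: Two distinct points $x,y$ of a space $X$ are called not $T_1$-points if there exists $z\in\{x,y\}$ such that $\{x,y\}\subset U$ for every open neighborhood $U$ of $z$ in $X$. A space $X$ is a non-separated-points space if every two distinct points of $X$ are not $T_1$-points. *)

theory Defs
  imports "HOL-Analysis.Analysis"
begin

definition not_T1_points :: "'a topology \<Rightarrow> 'a \<Rightarrow> 'a \<Rightarrow> bool" where
  "not_T1_points X x y \<longleftrightarrow>
     (\<exists>z\<in>{x, y}. \<forall>U. openin X U \<and> z \<in> U \<longrightarrow> {x, y} \<subseteq> U)"

definition non_separated_points_space :: "'a topology \<Rightarrow> bool" where
  "non_separated_points_space X \<longleftrightarrow>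
     (\<forall>x\<in>topspace X. \<forall>y\<in>topspace X. x \<noteq> y \<longrightarrow> not_T1_points X x y)"

definition dense_pathwise_connected :: "'a topology \<Rightarrow> bool" where
  "dense_pathwise_connected X \<longleftrightarrow>
     (\<forall>D. D \<subseteq> topspace X \<and> X closure_of D = topspace X
          \<longrightarrow> path_connected_space (subtopology X D))"

end

theory Submission
  imports Defs
begin

lemma path_aux:
  fixes Y :: "'a topology"
  assumes xy: "x \<in> topspace Y" "y \<in> topspace Y"
    and nb: "\<forall>U. openin Y U \<and> x \<in> U \<longrightarrow> y \<in> U"
  shows "\<exists>g. pathin Y g \<and> g 0 = x \<and> g 1 = y"
proof -
  define g where "g = (\<lambda>t::real. if t = 0 then x else y)"
  have "pathin Y g"
    unfolding pathin_def continuous_map_def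
  proof (intro conjI allI impI)
    show "g \<in> topspace (top_of_set {0..1}) \<rightarrow> topspace Y" using xy by (auto simp: g_def)
  next
    fix U assume U: "openin Y U"
    show "openin (top_of_set {0..1}) {t \<in> topspace (top_of_set {0..1}). g t \<in> U}"
    proof (cases "x \<in> U")
      case True
      then have "y \<in> U" using nb U by blast
      then have "{t \<in> topspace (top_of_set {0..1}). g t \<in> U} = topspace (top_of_set {0..1::real})"
        using True by (auto simp: g_def)
      then show ?thesis by simp
    next
      case False
      show ?thesis
      proof (cases "y \<in> U")
        case True
        have "{t \<in> topspace (top_of_set {0..1}). g t \<in> U} = {0..1::real} \<inter> {0<..}"
          using True False by (auto simp: g_def)
        then show ?thesis by (simp only:) (intro openin_open_Int open_greaterThan)
      next
        case F2: False
        have "{t \<in> topspace (top_of_set {0..1}). g t \<in> U} = {}"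
          using F2 False by (auto simp: g_def)
        then show ?thesis by (simp only:) (rule openin_empty)
      qed
    qed
  qed
  then show ?thesis by (auto simp: g_def)
qed

lemma path_aux2:
  fixes Y :: "'a topology"
  assumes xy: "x \<in> topspace Y" "y \<in> topspace Y"
    and nb: "\<forall>U. openin Y U \<and> x \<in> U \<longrightarrow> y \<in> U"
  shows "\<exists>g. pathin Y g \<and> g 0 = y \<and> g 1 = x"
proof -
  define g where "g = (\<lambda>t::real. if t = 1 then x else y)"
  have "pathin Y g"
    unfolding pathin_def continuous_map_def
  proof (intro conjI allI impI)
    show "g \<in> topspace (top_of_set {0..1}) \<rightarrow> topspace Y" using xy by (auto simp: g_def)
  next
    fix U assume U: "openin Y U"
    show "openin (top_of_set {0..1}) {t \<in> topspace (top_of_set {0..1}). g t \<in> U}"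
    proof (cases "x \<in> U")
      case True
      then have "y \<in> U" using nb U by blast
      then have "{t \<in> topspace (top_of_set {0..1}). g t \<in> U} = topspace (top_of_set {0..1::real})"
        using True by (auto simp: g_def)
      then show ?thesis by simp
    next
      case False
      show ?thesis
      proof (cases "y \<in> U")
        case True
        have "{t \<in> topspace (top_of_set {0..1}). g t \<in> U} = {0..1::real} \<inter> {..<1}"
          using True False by (auto simp: g_def)
        then show ?thesis by (simp only:) (intro openin_open_Int open_lessThan)
      next
        case F2: False
        have "{t \<in> topspace (top_of_set {0..1}). g t \<in> U} = {}"
          using F2 False by (auto simp: g_def)
        then show ?thesis by (simp only:) (rule openin_empty)
      qed
    qed
  qed
  then show ?thesis by (auto simp: g_def)
qed

theorem theorem5p6:
  fixes X :: "'a topology"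
  assumes "non_separated_points_space X"
  shows "dense_pathwise_connected X"
  unfolding dense_pathwise_connected_def
proof (intro allI impI)
  fix D assume D: "D \<subseteq> topspace X \<and> X closure_of D = topspace X"
  let ?Y = "subtopology X D"
  have tY: "topspace ?Y = D" using D by auto
  show "path_connected_space ?Y"
    unfolding path_connected_space_def
  proof (intro ballI)
    fix x y assume x: "x \<in> topspace ?Y" and y: "y \<in> topspace ?Y"
    show "\<exists>g. pathin ?Y g \<and> g 0 = x \<and> g 1 = y"
    proof (cases "x = y")
      case True
      have "pathin ?Y (\<lambda>_. x)" using x by (simp only: pathin_const)
      then show ?thesis using True by blast
    next
      case False
      have xX: "x \<in> topspace X" and yX: "y \<in> topspace X" using x y tY D by blast+
      have "not_T1_points X x y" using assms False xX yX
        unfolding non_separated_points_space_def by blast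
      then obtain z where z: "z \<in> {x, y}" "\<forall>U. openin X U \<and> z \<in> U \<longrightarrow> {x, y} \<subseteq> U"
        unfolding not_T1_points_def by blast
      have zY: "\<forall>V. openin ?Y V \<and> z \<in> V \<longrightarrow> {x, y} \<subseteq> V"
      proof (intro allI impI)
        fix V assume V: "openin ?Y V \<and> z \<in> V"
        then obtain U where U: "openin X U" "V = U \<inter> D" by (auto simp: openin_subtopology)
        then show "{x, y} \<subseteq> V" using z V x y tY by blast
      qed
      show ?thesis
      proof (cases "z = x")
        case True
        then have "\<forall>U. openin ?Y U \<and> x \<in> U \<longrightarrow> y \<in> U" using zY by blast
        then show ?thesis using path_aux[of x ?Y y] x y by blast
      next
        case False
        then have "z = y" using z by auto
        then have "\<forall>U. openin ?Y U \<and> y \<in> U \<longrightarrow> x \<in> U" using zY by blast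
        then show ?thesis using path_aux2[of y ?Y x] x y by blast
      qed
    qed
  qed
qed

end
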